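(* For every $N\in\mathbb{N}^*$, \[ R(N)=-2\sum_{k=1}^N\ \sum_{\substack{1\le i\le A(k)-1\\ \rho_i(k)-\rho_{i-1}(k)\ge 1/N>\rho_{i+1}(k)-\rho_i(k)}} B_1\big(N\rho_i(k)\big). \]
   Context: For $E\subset\mathbb{R}$, $q(E)=\min\{q\in\mathbb{N}^*:\exists p\in\mathbb{Z},\ p/q\in E\}$ ($=\infty$ if $E\cap\mathbb{Q}=\emptyset$). For $t\in\mathbb{R}$ and $\delta>0$, $q(t,\delta)=q(]t-\delta,t])$. $S(N)=\sum_{j=1}^N q\big(](j-1)/N,j/N]\big)$ and $R(N)=S(N)-N\int_0^1 q(t,1/N)\,dt$. For $k\in\mathbb{N}^*$, $A(k)=\sum_{n\le k}\varphi(n)$ ($\varphi$ Euler's totient), and $0=\rho_0(k)<\rho_1(k)<\dots<\rho_{A(k)}(k)=1$ are the elements of $[0,1]$ that are rational numbers $p/q$ in lowest terms with $1\le q\le k$ (the Farey fractions of order $k$ in $[0,1]$). $B_1(x)=0$ if $x\in\mathbb{Z}$ and $B_1(x)=\{x\}-1/2$ otherwise. *)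

theory Defs
  imports "HOL-Analysis.Analysis" "HOL-Number_Theory.Number_Theory" "HOL-Library.Extended_Nat"
begin

definition qset :: "real set \<Rightarrow> enat" where
  "qset E = (if \<exists>q::nat. q > 0 \<and> (\<exists>p::int. real_of_int p / real q \<in> E)
             then enat (LEAST q::nat. q > 0 \<and> (\<exists>p::int. real_of_int p / real q \<in> E))
             else \<infinity>)"

definition qpt :: "real \<Rightarrow> real \<Rightarrow> enat" where
  "qpt t \<delta> = qset {t - \<delta> <.. t}"

definition S :: "nat \<Rightarrow> real" where
  "S N = (\<Sum>j=1..N. real (the_enat (qset {real (j - 1) / real N <.. real j / real N})))"

definition R :: "nat \<Rightarrow> real" where
  "R N = S N - real N * integral {0..1} (\<lambda>t. real (the_enat (qpt t (1 / real N))))"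

definition A :: "nat \<Rightarrow> nat" where
  "A k = (\<Sum>n=1..k. totient n)"

definition farey :: "nat \<Rightarrow> real set" where
  "farey k = {x. 0 \<le> x \<and> x \<le> 1 \<and> (\<exists>p::int. \<exists>q::nat. 1 \<le> q \<and> q \<le> k \<and> x = real_of_int p / real q)}"

definition rho :: "nat \<Rightarrow> nat \<Rightarrow> real" where
  "rho i k = sorted_list_of_set (farey k) ! i"

definition B1 :: "real \<Rightarrow> real" where
  "B1 x = (if x \<in> \<int> then 0 else frac x - 1/2)"

end

theory Submission
  imports Defs
begin
lemma has_int_ind:
  fixes u b :: real
  assumes "0 \<le> u" "u \<le> b" "b \<le> 1"
  shows "(indicator {u..<b} has_integral (b - u)) {0..1}"
proof -
  have "((\<lambda>x. 1::real) has_integral (b - u)) {u..b}"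
    using has_integral_const_real[of "1::real" u b] assms by (simp add: content_real)
  then have "((\<lambda>x. 1::real) has_integral (b - u)) {u..<b}"
    by (subst has_integral_spike_set_eq[where T="{u..b}"]) (auto intro: negligible_subset[of "{b}"])
  moreover have "{u..<b} \<inter> {0..1} = {u..<b}" using assms by auto
  ultimately have "((\<lambda>x. if x \<in> {u..<b} then (1::real) else 0) has_integral (b - u)) {0..1}"
    by (subst has_integral_restrict_Int) simp
  moreover have "indicator {u..<b} = (\<lambda>x. if x \<in> {u..<b} then (1::real) else 0)"
    by (auto simp: indicator_def fun_eq_iff)
  ultimately show ?thesis by simp
qed

lemma count_ge:
  fixes y :: real and N :: nat
  assumes "1 \<le> y" "y \<le> real N + 1"
  shows "(\<Sum>j=1..N. if y \<le> real j then 1 else 0 :: real) = real N + 1 - of_int (ceiling y)"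
proof -
  have "(\<Sum>j=1..N. if y \<le> real j then 1 else 0 :: real) = (\<Sum>j\<in>{j\<in>{1..N}. y \<le> real j}. 1)"
    by (rule sum.inter_filter[symmetric]) simp
  also have "{j\<in>{1..N}. y \<le> real j} = {nat (ceiling y)..N}"
  proof -
    have "ceiling y \<ge> 1" using assms by linarith
    then show ?thesis
      by (auto simp: ceiling_le_iff nat_le_iff)
  qed
  also have "(\<Sum>j\<in>{nat (ceiling y)..N}. 1::real) = real (Suc N - nat (ceiling y))" by simp
  also have "\<dots> = real N + 1 - of_int (ceiling y)"
  proof -
    have "ceiling y \<ge> 1" "ceiling y \<le> int N + 1" using assms by (linarith, linarith)
    then obtain m where m: "ceiling y = int m" "m \<le> Suc N"
      by (metis int_ops(4) nonneg_int_cases of_nat_le_iff order.trans zero_le_one)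
    then show ?thesis by (simp add: of_nat_diff)
  qed
  finally show ?thesis .
qed

lemma gap_contrib:
  fixes a b :: real and N :: nat
  assumes N: "N \<ge> 1" and ab: "0 \<le> a" "a \<le> b" "b \<le> 1"
  shows "(\<Sum>j=1..N. indicator {a + 1/real N..<b} (real j / real N))
           - real N * integral {0..1} (indicator {a + 1/real N..<b})
         = (if b - a \<ge> 1/real N then (of_int (ceiling (real N * b)) - real N * b)
               - (of_int (ceiling (real N * a)) - real N * a) else (0::real))"
proof (cases "b - a \<ge> 1/real N")
  case False
  then have "{a + 1/real N..<b} = {}" by auto
  moreover have "indicator {} = (\<lambda>x::real. 0::real)" by (auto simp: fun_eq_iff)
  ultimately show ?thesis using False by simp
next
  case True
  have Npos: "real N > 0" using N by simp
  have int: "integral {0..1} (indicator {a + 1/real N..<b}) = b - (a + 1/real N)"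
    by (rule integral_unique, rule has_int_ind) (use ab True Npos in auto)
  have key: "real N * a + 1 \<le> real N * b"
    using True Npos by (simp add: field_simps)
  have ind: "indicator {a + 1/real N..<b} (real j / real N) =
     (if real N * a + 1 \<le> real j then 1 else 0) - (if real N * b \<le> real j then 1 else (0::real))" for j
  proof -
    have e0: "(a + 1/real N) * real N = real N * a + 1" using Npos by (simp add: field_simps)
    have e1: "(a + 1/real N \<le> real j / real N) = (real N * a + 1 \<le> real j)"
      using Npos by (simp only: pos_le_divide_eq e0)
    have e2: "(real j / real N < b) = (real j < real N * b)"
      using Npos by (simp add: field_simps)
    show ?thesis using key e1 e2 by (auto simp: indicator_def)
  qed
  have "(\<Sum>j=1..N. indicator {a + 1/real N..<b} (real j / real N)) =
      (\<Sum>j=1..N. (if real N * a + 1 \<le> real j then 1 else 0)) - (\<Sum>j=1..N. if real N * b \<le> real j then 1 else (0::real))"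
    by (simp add: ind sum_subtractf)
  also have "\<dots> = (real N + 1 - of_int (ceiling (real N * a + 1))) - (real N + 1 - of_int (ceiling (real N * b)))"
  proof -
    have "real N * a \<ge> 0" "real N * b \<le> real N" using ab Npos by auto
    then show ?thesis using key
      by (simp only: count_ge[of "real N * a + 1" N] count_ge[of "real N * b" N])
  qed
  finally have sm: "(\<Sum>j=1..N. indicator {a + 1/real N..<b} (real j / real N)) =
      (real N + 1 - of_int (ceiling (real N * a + 1))) - (real N + 1 - of_int (ceiling (real N * b)))" .
  have c1: "ceiling (real N * a + 1) = ceiling (real N * a) + 1" by simp
  have intN: "real N * integral {0..1} (indicator {a + 1/real N..<b}) = real N * b - real N * a - 1"
    using int Npos by (simp add: field_simps)
  show ?thesis unfolding sm intN c1 using True by simp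
qed

lemma ceil_N_minus: "ceiling (real N - x) = int N - floor x"
proof -
  have "floor (x - real N) = floor x - int N"
    using floor_diff_of_int[of x "int N"] by simp
  then show ?thesis by (simp add: ceiling_def)
qed
lemma C_frac: "of_int (ceiling x) - x - frac x = - 2 * B1 x"
proof (cases "x \<in> \<int>")
  case True
  then show ?thesis by (auto simp: B1_def frac_def elim!: Ints_cases)
next
  case False
  then have "x \<noteq> of_int (floor x)" by (metis Ints_of_int)
  then have "ceiling x = floor x + 1" by (simp add: ceiling_altdef) 
  then show ?thesis using False by (simp add: B1_def frac_def)
qed
lemma B1_N_minus: "B1 (real N - x) = - B1 x"
proof (cases "x \<in> \<int>")
  case True
  then have "real N - x \<in> \<int>" by auto
  then show ?thesis using True by (simp add: B1_def)
next
  case False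
  then have nI: "real N - x \<notin> \<int>"
    using Ints_diff[of "real N" "real N - x"] by auto
  have "frac (real N - x) = frac (- x)"
    using frac_add_int_left[of "real N" "- x"] by simp
  also have "\<dots> = 1 - frac x" using False by (simp add: frac_neg)
  finally show ?thesis using False nI by (simp add: B1_def)
qed
lemma B1_nat: "B1 (real N) = 0" by (simp add: B1_def)
lemma T_lemma:
  fixes r :: "nat \<Rightarrow> real" and N M :: nat and d :: real
  assumes r0: "r 0 = 0" and rM: "r M = 1" and sym: "\<And>i. i \<le> M \<Longrightarrow> r (M - i) = 1 - r i"
    and M1: "M \<ge> 1"
  shows "(\<Sum>i=1..M. if r i - r (i-1) \<ge> d then
            (of_int (ceiling (real N * r i)) - real N * r i)
            - (of_int (ceiling (real N * r (i-1))) - real N * r (i-1)) else 0)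
        = - 2 * (\<Sum>i\<in>{i\<in>{1..M - 1}. r i - r (i-1) \<ge> d \<and> d > r (i+1) - r i}. B1 (real N * r i))"
proof -
  define C where "C x = of_int (ceiling x) - x" for x :: real
  define g where "g i = r i - r (i-1)" for i
  have gM: "g (M + 1 - i) = g i" if "1 \<le> i" "i \<le> M" for i
  proof -
    have "M + 1 - i = M - (i - 1)" "M + 1 - i - 1 = M - i" using that by auto
    then show ?thesis unfolding g_def using sym[of "i-1"] sym[of i] that by simp
  qed
  have S1: "(\<Sum>i=1..M. if g i \<ge> d then C (real N * r i) - C (real N * r (i-1)) else 0)
     = (\<Sum>i=1..M. if g i \<ge> d then C (real N * r i) else 0) - (\<Sum>i=1..M. if g i \<ge> d then C (real N * r (i-1)) else 0)"
    by (simp add: sum_subtractf[symmetric] if_distrib cong: if_cong)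
  have S2: "(\<Sum>i=1..M. if g i \<ge> d then C (real N * r (i-1)) else 0) = (\<Sum>i=1..M. if g i \<ge> d then frac (real N * r i) else 0)"
  proof -
    have "(\<Sum>i=1..M. if g i \<ge> d then C (real N * r (i-1)) else 0)
        = (\<Sum>i=1..M. if g (M + 1 - i) \<ge> d then C (real N * r (M + 1 - i - 1)) else 0)"
      by (subst sum.atLeastAtMost_rev) simp
    also have "\<dots> = (\<Sum>i=1..M. if g i \<ge> d then frac (real N * r i) else 0)"
    proof (rule sum.cong[OF refl])
      fix i assume i: "i \<in> {1..M}"
      have "M + 1 - i - 1 = M - i" by simp
      then have "r (M + 1 - i - 1) = 1 - r i" using sym[of i] i by simp
      then have "C (real N * r (M + 1 - i - 1)) = frac (real N * r i)"
        unfolding C_def by (simp add: right_diff_distrib ceil_N_minus frac_def)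
      then show "(if g (M + 1 - i) \<ge> d then C (real N * r (M + 1 - i - 1)) else 0) = (if g i \<ge> d then frac (real N * r i) else 0)"
        using gM[of i] i by simp
    qed
    finally show ?thesis .
  qed
  have S3: "(\<Sum>i=1..M. if g i \<ge> d then C (real N * r i) - C (real N * r (i-1)) else 0)
     = - 2 * (\<Sum>i=1..M. if g i \<ge> d then B1 (real N * r i) else 0)"
    unfolding S1 S2 sum_subtractf[symmetric] sum_distrib_left
    by (rule sum.cong[OF refl]) (simp add: C_def C_frac)
  have hsym: "(\<Sum>i=1..M-1. if g i \<ge> d \<and> g (i+1) \<ge> d then B1 (real N * r i) else 0) = 0"
    (is "?Z = 0")
  proof -
    have "?Z = (\<Sum>i=1..M-1. if g (M - 1 + 1 - i) \<ge> d \<and> g (M - 1 + 1 - i + 1) \<ge> d then B1 (real N * r (M - 1 + 1 - i)) else 0)"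
      by (subst sum.atLeastAtMost_rev) simp
    also have "\<dots> = - ?Z"
      unfolding sum_negf[symmetric]
    proof (rule sum.cong[OF refl])
      fix i assume i: "i \<in> {1..M-1}"
      have e1: "M - 1 + 1 - i = M - i" using M1 by simp
      have e2: "M - 1 + 1 - i + 1 = M + 1 - i" using M1 i by auto
      have g1: "g (M - i) = g (i + 1)"
      proof -
        have "M - i = M + 1 - (i + 1)" by simp
        moreover have "i + 1 \<le> M" using i by auto
        ultimately show ?thesis using gM[of "i+1"] by simp
      qed
      have b: "B1 (real N * r (M - i)) = - B1 (real N * r i)"
      proof -
        have "i \<le> M" using i by auto
        then have "real N * r (M - i) = real N - real N * r i" using sym[of i] by (simp add: right_diff_distrib)
        then show ?thesis using B1_N_minus[of N "real N * r i"] by simp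
      qed
      show "(if g (M - 1 + 1 - i) \<ge> d \<and> g (M - 1 + 1 - i + 1) \<ge> d then B1 (real N * r (M - 1 + 1 - i)) else 0)
          = - (if g i \<ge> d \<and> g (i+1) \<ge> d then B1 (real N * r i) else 0)"
      proof -
        have "M + 1 - i = M - i + 1" using i by auto
        then have g2: "g (M - i + 1) = g i" using gM[of i] i by auto
        show ?thesis unfolding e1 e2 using g1 g2 i b by auto
      qed
    qed
    finally show ?thesis by simp
  qed
  have S4: "(\<Sum>i=1..M. if g i \<ge> d then B1 (real N * r i) else 0)
      = (\<Sum>i\<in>{i\<in>{1..M - 1}. g i \<ge> d \<and> d > g (i+1)}. B1 (real N * r i))"
  proof -
    have "{1..M} = insert M {1..M-1}" using M1 by auto
    then have "(\<Sum>i=1..M. if g i \<ge> d then B1 (real N * r i) else 0)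
        = (\<Sum>i=1..M-1. if g i \<ge> d then B1 (real N * r i) else 0)"
      using rM M1 by (simp add: B1_nat)
    also have "\<dots> = (\<Sum>i=1..M-1. (if g i \<ge> d \<and> d > g (i+1) then B1 (real N * r i) else 0)
          + (if g i \<ge> d \<and> g (i+1) \<ge> d then B1 (real N * r i) else 0))"
      by (rule sum.cong[OF refl]) auto
    also have "\<dots> = (\<Sum>i=1..M-1. (if g i \<ge> d \<and> d > g (i+1) then B1 (real N * r i) else 0))"
      using hsym by (simp add: sum.distrib)
    also have "\<dots> = (\<Sum>i\<in>{i\<in>{1..M - 1}. g i \<ge> d \<and> d > g (i+1)}. B1 (real N * r i))"
      by (rule sum.inter_filter[symmetric]) simp
    finally show ?thesis .
  qed
  show ?thesis using S3 S4 unfolding C_def g_def by simp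
qed


lemma farey_finite: "finite (farey k)"
proof -
  have "farey k \<subseteq> (\<lambda>(p,q). real_of_int p / real q) ` ({0..int k} \<times> {1..k})"
  proof
    fix x assume "x \<in> farey k"
    then obtain p :: int and q :: nat where h: "1 \<le> q" "q \<le> k" "x = real_of_int p / real q" "0 \<le> x" "x \<le> 1"
      unfolding farey_def by auto
    have qp: "real q > 0" using h by simp
    have "0 \<le> real_of_int p" using h qp by (simp add: divide_nonneg_pos zero_le_divide_iff)
    moreover have "real_of_int p \<le> real q" using h qp by (simp add: divide_le_eq_1)
    ultimately have "p \<in> {0..int k}" using h by auto
    then show "x \<in> (\<lambda>(p,q). real_of_int p / real q) ` ({0..int k} \<times> {1..k})"
      using h by force
  qed
  then show ?thesis by (rule finite_subset) simp
qed

lemma farey_0: "k \<ge> 1 \<Longrightarrow> 0 \<in> farey k"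
proof -
  assume k: "k \<ge> 1"
  have "\<exists>p::int. \<exists>q::nat. 1 \<le> q \<and> q \<le> k \<and> (0::real) = real_of_int p / real q"
    using k by (intro exI[where x="0::int"] exI[where x="1::nat"]) simp
  then show ?thesis unfolding farey_def by simp
qed

lemma farey_1: "k \<ge> 1 \<Longrightarrow> 1 \<in> farey k"
proof -
  assume k: "k \<ge> 1"
  have "\<exists>p::int. \<exists>q::nat. 1 \<le> q \<and> q \<le> k \<and> (1::real) = real_of_int p / real q"
    using k by (intro exI[where x="1::int"] exI[where x="1::nat"]) simp
  then show ?thesis unfolding farey_def by simp
qed

lemma farey_bounds: "x \<in> farey k \<Longrightarrow> 0 \<le> x \<and> x \<le> 1"
  unfolding farey_def by auto

lemma farey_sym: "x \<in> farey k \<Longrightarrow> 1 - x \<in> farey k"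
proof -
  assume "x \<in> farey k"
  then obtain p :: int and q :: nat where h: "1 \<le> q" "q \<le> k" "x = real_of_int p / real q" "0 \<le> x" "x \<le> 1"
    unfolding farey_def by auto
  have "1 - x = real_of_int (int q - p) / real q" using h by (simp add: field_simps)
  moreover have "0 \<le> 1 - x" "1 - x \<le> 1" using h by auto
  ultimately show ?thesis using h unfolding farey_def mem_Collect_eq by blast
qed

lemma sorted_sym:
  fixes F :: "real set"
  assumes fin: "finite F" and sym: "\<And>x. x \<in> F \<Longrightarrow> 1 - x \<in> F"
    and i: "i < length (sorted_list_of_set F)"
  shows "sorted_list_of_set F ! (length (sorted_list_of_set F) - 1 - i) = 1 - sorted_list_of_set F ! i"
proof -
  define L where "L = sorted_list_of_set F"
  define L' where "L' = map (\<lambda>x. 1 - x) (rev L)"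
  have sL: "sorted_wrt (<) L" unfolding L_def by (simp add: fin)
  have "sorted_wrt (<) L'" unfolding L'_def sorted_wrt_map sorted_wrt_rev
    by (rule sorted_wrt_mono_rel[OF _ sL]) simp
  moreover have "set L' = F"
  proof -
    have "set L' = (\<lambda>x. 1 - x) ` F" unfolding L'_def L_def using fin by simp
    also have "\<dots> = F"
    proof
      show "(\<lambda>x. 1 - x) ` F \<subseteq> F" using sym by auto
      show "F \<subseteq> (\<lambda>x. 1 - x) ` F"
      proof
        fix x assume "x \<in> F"
        then have "1 - x \<in> F" by (rule sym)
        then show "x \<in> (\<lambda>x. 1 - x) ` F" by (rule rev_image_eqI) simp
      qed
    qed
    finally show ?thesis .
  qed
  moreover have "sorted_wrt (<) L \<and> set L = F" using sL fin unfolding L_def by simp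
  ultimately have "L' = L" using ex1_sorted_list_for_set_if_finite[OF fin] by blast
  then have "L' ! i = L ! i" by simp
  then have "1 - L ! (length L - Suc i) = L ! i"
    using i unfolding L'_def L_def[symmetric] by (simp add: rev_nth)
  then show ?thesis unfolding L_def[symmetric] by simp
qed

lemma decomp:
  fixes L :: "real list" and t d :: real
  assumes sL: "sorted_wrt (<) L" and n: "length L = M + 1" and L0: "L ! 0 = 0" and LM: "L ! M = 1"
    and t: "0 \<le> t" "t \<le> 1" and d: "d > 0"
  shows "(if \<exists>x\<in>set L. t - d < x \<and> x \<le> t then 0 else 1) = (\<Sum>i=1..M. indicator {L!(i-1) + d ..< L!i} t :: real)"
proof -
  have mono: "L ! a \<le> L ! b" if "a \<le> b" "b \<le> M" for a b
  proof (cases "a = b")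
    case False
    then show ?thesis using sL that n by (simp add: sorted_wrt_iff_nth_less less_imp_le)
  qed simp
  have strict: "L ! a < L ! b" if "a < b" "b \<le> M" for a b
    using sL that n by (simp add: sorted_wrt_iff_nth_less)
  show ?thesis
  proof (cases "t = 1")
    case True
    have "1 \<in> set L" using LM n by (metis add_less_cancel_left less_add_one nth_mem add.commute)
    then have l: "\<exists>x\<in>set L. t - d < x \<and> x \<le> t" using True d by (intro bexI[of _ 1]) auto
    have "indicator {L!(i-1) + d ..< L!i} t = (0::real)" if "i \<in> {1..M}" for i
      using mono[of i M] that True LM by (auto simp: indicator_def)
    then show ?thesis using l by simp
  next
    case False
    then have t1: "t < 1" using t by simp
    define i where "i = (LEAST i. t < L ! i)"
    have ti: "t < L ! i" unfolding i_def by (rule LeastI[of _ M]) (use LM t1 in simp)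
    have iM: "i \<le> M" unfolding i_def by (rule Least_le) (use LM t1 in simp)
    have i1: "i \<ge> 1" using ti L0 t by (cases i) auto
    have below: "\<not> t < L ! j" if "j < i" for j using that unfolding i_def by (rule not_less_Least)
    have ti1: "L ! (i - 1) \<le> t" using below[of "i-1"] i1 by simp
    have zero: "indicator {L!(j-1) + d ..< L!j} t = (0::real)" if "j \<in> {1..M}" "j \<noteq> i" for j
    proof (cases "j < i")
      case True
      then show ?thesis using below[of j] by (auto simp: indicator_def)
    next
      case False
      then have "i \<le> j - 1" using that by auto
      then have "L ! i \<le> L ! (j - 1)" using mono[of i "j-1"] that by auto
      then show ?thesis using ti d by (auto simp: indicator_def)
    qed
    have "(\<Sum>j=1..M. indicator {L!(j-1) + d ..< L!j} t :: real) = indicator {L!(i-1) + d ..< L!i} t"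
    proof -
      have "(\<Sum>j=1..M. indicator {L!(j-1) + d ..< L!j} t :: real) = indicator {L!(i-1) + d ..< L!i} t + (\<Sum>j\<in>{1..M} - {i}. indicator {L!(j-1) + d ..< L!j} t)"
        using i1 iM by (subst sum.remove[of _ i]) auto
      also have "(\<Sum>j\<in>{1..M} - {i}. indicator {L!(j-1) + d ..< L!j} t :: real) = 0"
        using zero by (intro sum.neutral) auto
      finally show ?thesis by simp
    qed
    also have "\<dots> = (if L!(i-1) + d \<le> t then 1 else 0)" using ti by (simp add: indicator_def)
    also have "\<dots> = (if \<exists>x\<in>set L. t - d < x \<and> x \<le> t then 0 else 1)"
    proof -
      have "(\<exists>x\<in>set L. t - d < x \<and> x \<le> t) \<longleftrightarrow> t - d < L ! (i - 1)"
      proof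
        assume "\<exists>x\<in>set L. t - d < x \<and> x \<le> t"
        then obtain m where m: "m < length L" "t - d < L ! m" "L ! m \<le> t" by (auto simp: in_set_conv_nth)
        have "m < i"
        proof (rule ccontr)
          assume "\<not> m < i"
          then have "L ! i \<le> L ! m" using mono[of i m] m n by auto
          then show False using ti m by simp
        qed
        then have "L ! m \<le> L ! (i - 1)" using mono[of m "i-1"] iM by auto
        then show "t - d < L ! (i - 1)" using m by simp
      next
        assume "t - d < L ! (i - 1)"
        moreover have "L ! (i - 1) \<in> set L" using iM n by (intro nth_mem) simp
        ultimately show "\<exists>x\<in>set L. t - d < x \<and> x \<le> t" using ti1 by blast
      qed
      then show ?thesis by auto
    qed
    finally show ?thesis by simp
  qed
qed


lemma count_less:
  fixes m N :: nat
  assumes "1 \<le> m" "m \<le> N + 1"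
  shows "(\<Sum>k=1..N. if k < m then 1 else 0 :: real) = real m - 1"
proof -
  have "(\<Sum>k=1..N. if k < m then 1 else 0 :: real) = (\<Sum>k\<in>{k\<in>{1..N}. k < m}. 1)"
    by (rule sum.inter_filter[symmetric]) simp
  also have "{k\<in>{1..N}. k < m} = {1..<m}" using assms by auto
  finally show ?thesis using assms by (simp add: of_nat_diff)
qed

lemma qset_decomp:
  fixes N :: nat and t :: real
  assumes N: "N \<ge> 1" and t: "0 \<le> t" "t \<le> 1"
  shows "real (the_enat (qset {t - 1/real N <.. t}))
       = 1 + (\<Sum>k=1..N. if \<exists>x\<in>farey k. t - 1/real N < x \<and> x \<le> t then 0 else 1)"
proof -
  define E where "E = {t - 1/real N <.. t}"
  define P where "P q \<longleftrightarrow> q > 0 \<and> (\<exists>p::int. real_of_int p / real q \<in> E)" for q :: nat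
  have Npos: "real N > 0" using N by simp
  have PN: "P N"
  proof -
    define p where "p = floor (t * real N)"
    have "real_of_int p \<le> t * real N" "t * real N < real_of_int p + 1" unfolding p_def by linarith+
    moreover have "(t - 1 / real N) * real N = t * real N - 1" using Npos by (simp add: field_simps)
    ultimately have "real_of_int p / real N \<le> t" "t - 1 / real N < real_of_int p / real N"
      using Npos by (simp_all add: pos_divide_le_eq pos_less_divide_eq)
    then show ?thesis unfolding P_def E_def using N by auto
  qed
  define m where "m = (LEAST q. P q)"
  have Pm: "P m" unfolding m_def using PN by (rule LeastI)
  have mN: "m \<le> N" unfolding m_def using PN by (rule Least_le)
  have m1: "m \<ge> 1" using Pm unfolding P_def by simp
  have q: "qset E = enat m" unfolding qset_def using PN unfolding P_def m_def by auto
  have iff: "(\<exists>x\<in>farey k. t - 1/real N < x \<and> x \<le> t) \<longleftrightarrow> m \<le> k" if k: "k \<ge> 1" for k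
  proof
    assume "\<exists>x\<in>farey k. t - 1/real N < x \<and> x \<le> t"
    then obtain p :: int and q :: nat where h: "1 \<le> q" "q \<le> k" "real_of_int p / real q \<in> E"
      unfolding farey_def E_def by auto
    then have "P q" unfolding P_def by auto
    then have "m \<le> q" unfolding m_def by (rule Least_le)
    then show "m \<le> k" using h by simp
  next
    assume mk: "m \<le> k"
    obtain p :: int where p: "real_of_int p / real m \<in> E" using Pm unfolding P_def by auto
    show "\<exists>x\<in>farey k. t - 1/real N < x \<and> x \<le> t"
    proof (cases "real_of_int p / real m \<ge> 0")
      case True
      have "real_of_int p / real m \<le> 1" using p t unfolding E_def by auto
      then have "real_of_int p / real m \<in> farey k"
        using True mk m1 unfolding farey_def by blast
      then show ?thesis using p unfolding E_def by auto
    next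
      case False
      then have "0 \<in> E" using p t unfolding E_def by auto
      then show ?thesis using farey_0[OF k] unfolding E_def by (intro bexI[of _ 0]) auto
    qed
  qed
  have "(\<Sum>k=1..N. if \<exists>x\<in>farey k. t - 1/real N < x \<and> x \<le> t then 0 else 1)
      = (\<Sum>k=1..N. if k < m then 1 else 0 :: real)"
    using iff by (intro sum.cong refl) (auto simp: not_le)
  also have "\<dots> = real m - 1" using m1 mN by (intro count_less) auto
  finally show ?thesis unfolding E_def[symmetric] q by simp
qed


lemma farey_one: "farey 1 = {0, 1}"
proof
  show "{0, 1} \<subseteq> farey 1" using farey_0[of 1] farey_1[of 1] by simp
  show "farey 1 \<subseteq> {0, 1}"
  proof
    fix x assume "x \<in> farey 1"
    then obtain p :: int where h: "x = real_of_int p" "0 \<le> x" "x \<le> 1"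
      unfolding farey_def by auto
    then have "p = 0 \<or> p = 1" by linarith
    then show "x \<in> {0, 1}" using h by auto
  qed
qed

lemma farey_Suc:
  assumes k: "k \<ge> 1"
  shows "farey (Suc k) = farey k \<union> (\<lambda>p. real p / real (Suc k)) ` totatives (Suc k)"
proof
  show "farey k \<union> (\<lambda>p. real p / real (Suc k)) ` totatives (Suc k) \<subseteq> farey (Suc k)"
  proof
    fix x assume "x \<in> farey k \<union> (\<lambda>p. real p / real (Suc k)) ` totatives (Suc k)"
    then show "x \<in> farey (Suc k)"
    proof
      assume "x \<in> farey k"
      then show ?thesis unfolding farey_def by (auto intro: le_SucI)
    next
      assume "x \<in> (\<lambda>p. real p / real (Suc k)) ` totatives (Suc k)"
      then obtain p where p: "p \<in> totatives (Suc k)" "x = real p / real (Suc k)" by auto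
      then have "p \<le> Suc k" by (simp add: in_totatives_iff)
      then have "0 \<le> x" "x \<le> 1" using p by auto
      moreover have "\<exists>p'::int. \<exists>q::nat. 1 \<le> q \<and> q \<le> Suc k \<and> x = real_of_int p' / real q"
        using p by (intro exI[where x="int p"] exI[where x="Suc k"]) simp
      ultimately show ?thesis unfolding farey_def by simp
    qed
  qed
  show "farey (Suc k) \<subseteq> farey k \<union> (\<lambda>p. real p / real (Suc k)) ` totatives (Suc k)"
  proof
    fix x assume "x \<in> farey (Suc k)"
    then obtain p :: int and q :: nat where h: "1 \<le> q" "q \<le> Suc k" "x = real_of_int p / real q" "0 \<le> x" "x \<le> 1"
      unfolding farey_def by auto
    show "x \<in> farey k \<union> (\<lambda>p. real p / real (Suc k)) ` totatives (Suc k)"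
    proof (cases "q \<le> k")
      case True
      then have "x \<in> farey k" using h unfolding farey_def by blast
      then show ?thesis by simp
    next
      case False
      then have q: "q = Suc k" using h by simp
      have p0: "p \<ge> 0" using h by (simp add: zero_le_divide_iff)
      define g where "g = gcd p (int q)"
      have gpos: "g > 0" unfolding g_def using h by simp
      obtain p' where p': "p = g * p'" unfolding g_def by (meson gcd_dvd1 dvdE)
      obtain q' where q': "int q = g * q'" unfolding g_def by (meson gcd_dvd2 dvdE)
      have "0 < g * q'" using q' h by linarith
      then have q'pos: "q' > 0" using gpos zero_less_mult_pos by blast
      have xq': "x = real_of_int p' / real_of_int q'"
      proof -
        have "real q = real_of_int (int q)" by simp
        also have "\<dots> = real_of_int g * real_of_int q'" by (simp add: q')
        finally have A: "real q = real_of_int g * real_of_int q'" .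
        have B: "real_of_int p = real_of_int g * real_of_int p'" by (simp add: p')
        have "x = (real_of_int g * real_of_int p') / (real_of_int g * real_of_int q')"
          using h(3) A B by simp
        then show ?thesis using gpos by simp
      qed
      show ?thesis
      proof (cases "g = 1")
        case False
        then have "g \<ge> 2" using gpos by simp
        then have "2 * q' \<le> g * q'" using q'pos by (intro mult_right_mono) auto
        then have "q' * 2 \<le> int q" using q' by simp
        then have "q' \<le> int k" using q by simp
        then have "nat q' \<le> k" "1 \<le> nat q'" using q'pos by auto
        moreover have "x = real_of_int p' / real (nat q')" using xq' q'pos by simp
        ultimately have "x \<in> farey k" using h unfolding farey_def by blast
        then show ?thesis by simp
      next
        case True
        show ?thesis
        proof (cases "p = 0")
          case True
          then have "x \<in> farey k" using h farey_0[OF k] by simp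
          then show ?thesis by simp
        next
          case False
          have "coprime p (int q)" using \<open>g = 1\<close> unfolding g_def by (simp add: coprime_iff_gcd_eq_1)
          moreover have "int (nat p) = p" using p0 by simp
          ultimately have "coprime (int (nat p)) (int q)" by simp
          then have cop: "coprime (nat p) q" by (simp only: coprime_int_iff)
          have "real_of_int p \<le> real q" using h by (simp add: divide_le_eq_1)
          then have "nat p \<in> totatives (Suc k)" using cop q p0 False by (auto simp: in_totatives_iff)
          moreover have "x = real (nat p) / real (Suc k)" using h q p0 by simp
          ultimately show ?thesis by blast
        qed
      qed
    qed
  qed
qed

lemma farey_new_disjoint:
  assumes k: "k \<ge> 1"
  shows "farey k \<inter> (\<lambda>p. real p / real (Suc k)) ` totatives (Suc k) = {}"
proof (rule ccontr)
  assume "\<not> ?thesis"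
  then obtain p where p: "p \<in> totatives (Suc k)" "real p / real (Suc k) \<in> farey k" by auto
  then obtain a :: int and b :: nat where h: "1 \<le> b" "b \<le> k" "real p / real (Suc k) = real_of_int a / real b"
    unfolding farey_def by auto
  then have "real p * real b = real_of_int a * real (Suc k)"
    by (simp add: field_simps)
  then have "real_of_int (int p * int b) = real_of_int (a * int (Suc k))" by simp
  then have "int p * int b = a * int (Suc k)" by (simp only: of_int_eq_iff)
  then have "int (Suc k) dvd int p * int b" by simp
  moreover have "coprime (Suc k) p" using p by (simp add: in_totatives_iff coprime_commute)
  then have "coprime (int (Suc k)) (int p)" by (simp only: coprime_int_iff)
  ultimately have "int (Suc k) dvd int b" using coprime_dvd_mult_right_iff by blast
  then have "Suc k dvd b" by (simp only: int_dvd_int_iff)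
  then have "Suc k \<le> b" using h by (simp add: dvd_imp_le)
  then show False using h by simp
qed

lemma card_farey: "k \<ge> 1 \<Longrightarrow> card (farey k) = A k + 1"
proof (induction k rule: dec_induct)
  case base
  show ?case using farey_one by (simp add: A_def)
next
  case (step k)
  have inj: "inj_on (\<lambda>p. real p / real (Suc k)) (totatives (Suc k))"
    by (rule inj_onI) (simp add: divide_cancel_right)
  have "card (farey (Suc k)) = card (farey k) + card ((\<lambda>p. real p / real (Suc k)) ` totatives (Suc k))"
    unfolding farey_Suc[OF step(1)]
    by (rule card_Un_disjoint) (use farey_finite farey_new_disjoint[OF step(1)] in auto)
  also have "card ((\<lambda>p. real p / real (Suc k)) ` totatives (Suc k)) = totient (Suc k)"
    using card_image[OF inj] by (simp add: totient_def)
  finally show ?case using step by (simp add: A_def)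
qed


lemma ind_integrable:
  fixes u b :: real
  assumes "0 \<le> u" "b \<le> 1"
  shows "(indicator {u..<b} :: real \<Rightarrow> real) integrable_on {0..1}"
proof (cases "u \<le> b")
  case True
  then show ?thesis using has_int_ind[of u b] assms unfolding integrable_on_def by blast
next
  case False
  then have "indicator {u..<b} = (\<lambda>x::real. 0::real)" by (auto simp: fun_eq_iff)
  then show ?thesis by (simp add: integrable_0)
qed

lemma farey_list:
  assumes k: "k \<ge> 1"
  shows "sorted_wrt (<) (sorted_list_of_set (farey k))"
    and "set (sorted_list_of_set (farey k)) = farey k"
    and "length (sorted_list_of_set (farey k)) = A k + 1"
    and "rho 0 k = 0" and "rho (A k) k = 1"
    and "\<And>i. i \<le> A k \<Longrightarrow> rho (A k - i) k = 1 - rho i k"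
    and "A k \<ge> 1"
    and "\<And>i. i \<le> A k \<Longrightarrow> 0 \<le> rho i k \<and> rho i k \<le> 1"
    and "\<And>i. 1 \<le> i \<Longrightarrow> i \<le> A k \<Longrightarrow> rho (i - 1) k \<le> rho i k"
proof -
  define L where "L = sorted_list_of_set (farey k)"
  have fin: "finite (farey k)" by (rule farey_finite)
  show sL: "sorted_wrt (<) (sorted_list_of_set (farey k))" using fin by simp
  show setL: "set (sorted_list_of_set (farey k)) = farey k" using fin by simp
  show len: "length (sorted_list_of_set (farey k)) = A k + 1" using card_farey[OF k] by simp
  have rho: "rho i k = L ! i" for i unfolding rho_def L_def ..
  have mono: "L ! a \<le> L ! b" if "a \<le> b" "b \<le> A k" for a b
  proof (cases "a = b")
    case False
    then show ?thesis using sL that len unfolding L_def by (simp add: sorted_wrt_iff_nth_less less_imp_le)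
  qed simp
  have bnd: "0 \<le> L ! i \<and> L ! i \<le> 1" if "i \<le> A k" for i
  proof -
    have "L ! i \<in> farey k" using that len setL unfolding L_def by (metis less_Suc_eq_le add.commute plus_1_eq_Suc nth_mem)
    then show ?thesis by (rule farey_bounds)
  qed
  then show "\<And>i. i \<le> A k \<Longrightarrow> 0 \<le> rho i k \<and> rho i k \<le> 1" unfolding rho by blast
  have L0: "L ! 0 = 0"
  proof -
    have "0 \<in> set L" using farey_0[OF k] setL unfolding L_def by simp
    then obtain m where m: "m < length L" "L ! m = 0" by (auto simp: in_set_conv_nth)
    then have "L ! 0 \<le> 0" using mono[of 0 m] len unfolding L_def by auto
    then show ?thesis using bnd[of 0] by simp
  qed
  then show "rho 0 k = 0" unfolding rho .
  have sym: "L ! (A k - i) = 1 - L ! i" if "i \<le> A k" for i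
    using sorted_sym[OF fin farey_sym, of i] that len unfolding L_def by simp
  show "\<And>i. i \<le> A k \<Longrightarrow> rho (A k - i) k = 1 - rho i k" unfolding rho using sym by blast
  show "rho (A k) k = 1" unfolding rho using sym[of 0] L0 by simp
  show "A k \<ge> 1"
  proof -
    have "card {0::real, 1} \<le> card (farey k)"
      using farey_0[OF k] farey_1[OF k] fin by (intro card_mono) auto
    then show ?thesis using card_farey[OF k] by simp
  qed
  show "\<And>i. 1 \<le> i \<Longrightarrow> i \<le> A k \<Longrightarrow> rho (i - 1) k \<le> rho i k"
    unfolding rho using mono by simp
qed

theorem proposition5:
  fixes N :: nat
  assumes "N \<ge> 1"
  shows "R N = - 2 * (\<Sum>k=1..N. \<Sum>i\<in>{i\<in>{1..A k - 1}.
             rho i k - rho (i - 1) k \<ge> 1 / real N \<and> 1 / real N > rho (i + 1) k - rho i k}.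
             B1 (real N * rho i k))"
proof -
  define d where "d = 1 / real N"
  define ind where "ind k i t = (indicator {rho (i-1) k + 1 / real N ..< rho i k} t :: real)" for k i and t :: real
  define Q where "Q t = real (the_enat (qpt t (1 / real N)))" for t
  have Npos: "real N > 0" using assms by simp
  have Qdec: "Q t = 1 + (\<Sum>k=1..N. \<Sum>i=1..A k. ind k i t)" if t: "0 \<le> t" "t \<le> 1" for t
  proof -
    have "Q t = 1 + (\<Sum>k=1..N. if \<exists>x\<in>farey k. t - 1/real N < x \<and> x \<le> t then 0 else 1)"
      unfolding Q_def qpt_def using qset_decomp[OF assms t] .
    also have "(\<Sum>k=1..N. if \<exists>x\<in>farey k. t - 1/real N < x \<and> x \<le> t then 0 else 1) = (\<Sum>k=1..N. \<Sum>i=1..A k. ind k i t)"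
    proof (rule sum.cong[OF refl])
      fix k assume "k \<in> {1..N}"
      then have k: "k \<ge> 1" by simp
      note fl = farey_list[OF k]
      have "(if \<exists>x\<in>set (sorted_list_of_set (farey k)). t - 1/real N < x \<and> x \<le> t then 0 else 1)
          = (\<Sum>i=1..A k. indicator {sorted_list_of_set (farey k) ! (i-1) + 1/real N ..< sorted_list_of_set (farey k) ! i} t :: real)"
        by (rule decomp[OF fl(1) fl(3) _ _ t]) (use fl(4,5) Npos in \<open>simp_all add: rho_def\<close>)
      then show "(if \<exists>x\<in>farey k. t - 1/real N < x \<and> x \<le> t then 0 else 1) = (\<Sum>i=1..A k. ind k i t)"
        unfolding fl(2) ind_def rho_def .
    qed
    finally show ?thesis .
  qed
  have intg: "ind k i integrable_on {0..1}" if "k \<in> {1..N}" "i \<in> {1..A k}" for k i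
  proof -
    have k: "k \<ge> 1" using that by simp
    have "0 \<le> rho (i-1) k" "rho i k \<le> 1" using farey_list(8)[OF k, of "i-1"] farey_list(8)[OF k, of i] that by auto
    then have "(indicator {rho (i-1) k + 1 / real N ..< rho i k} :: real \<Rightarrow> real) integrable_on {0..1}"
      using Npos by (intro ind_integrable) auto
    then show ?thesis unfolding ind_def[abs_def] by simp
  qed
  have SN: "S N = real N + (\<Sum>k=1..N. \<Sum>i=1..A k. \<Sum>j=1..N. ind k i (real j / real N))"
  proof -
    have "S N = (\<Sum>j=1..N. Q (real j / real N))"
      unfolding S_def Q_def qpt_def
    proof (rule sum.cong[OF refl])
      fix j assume "j \<in> {1..N}"
      then have "real (j - 1) / real N = real j / real N - 1 / real N"
        by (simp add: of_nat_diff diff_divide_distrib)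
      then show "real (the_enat (qset {real (j - 1) / real N<..real j / real N})) =
          real (the_enat (qset {real j / real N - 1 / real N<..real j / real N}))" by simp
    qed
    also have "\<dots> = (\<Sum>j=1..N. 1 + (\<Sum>k=1..N. \<Sum>i=1..A k. ind k i (real j / real N)))"
      by (rule sum.cong[OF refl], rule Qdec) (use Npos in auto)
    also have "\<dots> = real N + (\<Sum>j=1..N. \<Sum>k=1..N. \<Sum>i=1..A k. ind k i (real j / real N))"
      by (simp add: sum.distrib)
    also have "(\<Sum>j=1..N. \<Sum>k=1..N. \<Sum>i=1..A k. ind k i (real j / real N)) = (\<Sum>k=1..N. \<Sum>i=1..A k. \<Sum>j=1..N. ind k i (real j / real N))"
      by (subst sum.swap) (rule sum.cong[OF refl], rule sum.swap)
    finally show ?thesis .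
  qed
  have IN: "integral {0..1} Q = 1 + (\<Sum>k=1..N. \<Sum>i=1..A k. integral {0..1} (ind k i))"
  proof -
    have "integral {0..1} Q = integral {0..1} (\<lambda>t. 1 + (\<Sum>k=1..N. \<Sum>i=1..A k. ind k i t))"
      by (rule integral_cong) (simp add: Qdec)
    also have "\<dots> = integral {0..1} (\<lambda>t::real. 1::real) + integral {0..1} (\<lambda>t. \<Sum>k=1..N. \<Sum>i=1..A k. ind k i t)"
    proof -
      have i1: "(\<lambda>t::real. 1::real) integrable_on {0..1}" by (rule integrable_const_ivl)
      have i2: "(\<lambda>t. \<Sum>k=1..N. \<Sum>i=1..A k. ind k i t) integrable_on {0..1}"
        by (auto intro!: integrable_sum intg)
      show ?thesis by (rule Henstock_Kurzweil_Integration.integral_add[OF i1 i2])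
    qed
    also have "integral {0..1} (\<lambda>t. \<Sum>k=1..N. \<Sum>i=1..A k. ind k i t) = (\<Sum>k=1..N. integral {0..1} (\<lambda>t. \<Sum>i=1..A k. ind k i t))"
      by (rule integral_sum) (auto intro!: integrable_sum intg)
    also have "\<dots> = (\<Sum>k=1..N. \<Sum>i=1..A k. integral {0..1} (ind k i))"
      by (rule sum.cong[OF refl], rule integral_sum) (auto intro!: intg)
    finally show ?thesis by simp
  qed
  have "R N = (\<Sum>k=1..N. \<Sum>i=1..A k. (\<Sum>j=1..N. ind k i (real j / real N)) - real N * integral {0..1} (ind k i))"
  proof -
    have "R N = S N - real N * integral {0..1} Q" unfolding R_def Q_def ..
    also have "\<dots> = (\<Sum>k=1..N. \<Sum>i=1..A k. \<Sum>j=1..N. ind k i (real j / real N)) - (\<Sum>k=1..N. \<Sum>i=1..A k. real N * integral {0..1} (ind k i))"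
      unfolding SN IN by (simp add: algebra_simps sum_distrib_left)
    also have "\<dots> = (\<Sum>k=1..N. \<Sum>i=1..A k. (\<Sum>j=1..N. ind k i (real j / real N)) - real N * integral {0..1} (ind k i))"
      by (simp add: sum_subtractf)
    finally show ?thesis .
  qed
  also have "\<dots> = (\<Sum>k=1..N. - 2 * (\<Sum>i\<in>{i\<in>{1..A k - 1}.
             rho i k - rho (i - 1) k \<ge> 1 / real N \<and> 1 / real N > rho (i + 1) k - rho i k}.
             B1 (real N * rho i k)))"
  proof (rule sum.cong[OF refl])
    fix k assume "k \<in> {1..N}"
    then have k: "k \<ge> 1" by simp
    note fl = farey_list[OF k]
    have "(\<Sum>i=1..A k. (\<Sum>j=1..N. ind k i (real j / real N)) - real N * integral {0..1} (ind k i))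
        = (\<Sum>i=1..A k. if rho i k - rho (i-1) k \<ge> 1 / real N then
            (of_int (ceiling (real N * rho i k)) - real N * rho i k)
            - (of_int (ceiling (real N * rho (i-1) k)) - real N * rho (i-1) k) else 0)"
    proof (rule sum.cong[OF refl])
      fix i assume i: "i \<in> {1..A k}"
      have "0 \<le> rho (i-1) k" "rho i k \<le> 1" using fl(8)[of "i-1"] fl(8)[of i] i by auto
      moreover have "rho (i-1) k \<le> rho i k" using fl(9)[of i] i by auto
      ultimately show "(\<Sum>j=1..N. ind k i (real j / real N)) - real N * integral {0..1} (ind k i) =
          (if rho i k - rho (i-1) k \<ge> 1 / real N then
            (of_int (ceiling (real N * rho i k)) - real N * rho i k)
            - (of_int (ceiling (real N * rho (i-1) k)) - real N * rho (i-1) k) else 0)"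
        unfolding ind_def[abs_def] using gap_contrib[OF assms] by simp
    qed
    also have "\<dots> = - 2 * (\<Sum>i\<in>{i\<in>{1..A k - 1}.
             rho i k - rho (i - 1) k \<ge> 1 / real N \<and> 1 / real N > rho (i + 1) k - rho i k}.
             B1 (real N * rho i k))"
      by (rule T_lemma[where r="\<lambda>i. rho i k"]) (use fl(4,5,6,7) in auto)
    finally show "(\<Sum>i=1..A k. (\<Sum>j=1..N. ind k i (real j / real N)) - real N * integral {0..1} (ind k i)) = - 2 * (\<Sum>i\<in>{i\<in>{1..A k - 1}.
             rho i k - rho (i - 1) k \<ge> 1 / real N \<and> 1 / real N > rho (i + 1) k - rho i k}.
             B1 (real N * rho i k))" .
  qed
  also have "\<dots> = - 2 * (\<Sum>k=1..N. \<Sum>i\<in>{i\<in>{1..A k - 1}.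
             rho i k - rho (i - 1) k \<ge> 1 / real N \<and> 1 / real N > rho (i + 1) k - rho i k}.
             B1 (real N * rho i k))"
    by (simp add: sum_distrib_left)
  finally show ?thesis .
qed

end
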